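(* Fix $\omega\in(0,1)$. For a Banach space $(X,\|\cdot\|_X)$ define $f_\omega:X\to X$ by $f_\omega(x)=\|x\|_X^{\omega-1}x$ for $x\neq0$ and $f_\omega(0)=0$. Then for every $p\in(0,\infty)$ and all $x,y\in X$, $$\frac{\eta(p,\omega)\|x-y\|_X}{(\|x\|_X^{p\omega}+\|y\|_X^{p\omega})^{\frac{1-\omega}{p\omega}}}\le\|f_\omega(x)-f_\omega(y)\|_X\le2^{1-\omega}\|x-y\|_X^\omega,$$ where $\eta(p,\omega)=\inf_{\sigma\in[0,1)}\frac{1-\sigma^\omega}{1-\sigma}(1+\sigma^{p\omega})^{\frac{1-\omega}{p\omega}}$. Moreover (for $X\neq\{0\}$) neither of the constants $\eta(p,\omega)$ and $2^{1-\omega}$ in these two inequalities can be improved. *)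

theory Defs
  imports "HOL-Analysis.Analysis"
begin

definition f_omega :: "real \<Rightarrow> 'a::real_normed_vector \<Rightarrow> 'a" where
  "f_omega \<omega> x = (if x = 0 then 0 else (norm x powr (\<omega> - 1)) *\<^sub>R x)"

definition eta :: "real \<Rightarrow> real \<Rightarrow> real" where
  "eta p \<omega> = Inf ((\<lambda>\<sigma>. (1 - \<sigma> powr \<omega>) / (1 - \<sigma>)
        * (1 + \<sigma> powr (p * \<omega>)) powr ((1 - \<omega>) / (p * \<omega>))) ` {0..<1})"

end

theory Submission
  imports Defs
begin

lemma neg_bern:
  fixes x r :: real
  assumes "x > 0" "r \<le> 0"
  shows "1 + r * (x - 1) \<le> x powr r"
proof -
  have "r * (x - 1) \<le> r * ln x" using ln_le_minus_one[OF assms(1)] assms(2)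
    by (simp add: mult_left_mono_neg)
  also have "1 + r * ln x \<le> exp (r * ln x)" by simp
  finally show ?thesis using assms by (simp add: powr_def)
qed

lemma conc_pow:
  fixes a b w :: real
  assumes "a > 0" "b > 0" "0 < w" "w < 1"
  shows "a powr w + b powr w \<le> 2 powr (1 - w) * (a + b) powr w"
proof -
  define m where "m = (a + b) / 2"
  have m: "m > 0" using assms by (simp add: m_def)
  have ya: "(a/m) powr w \<le> w * (a/m) + (1 - w)"
    using Youngs_inequality_0[of w "1-w" "a/m" 1] assms m by simp
  have yb: "(b/m) powr w \<le> w * (b/m) + (1 - w)"
    using Youngs_inequality_0[of w "1-w" "b/m" 1] assms m by simp
  have "a + b = 2 * m" by (simp add: m_def)
  hence s0: "(a + b) / m = 2" using m by simp
  have s1: "a/m + b/m = 2" using s0 by (simp add: add_divide_distrib)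
  have "w * (a/m) + w * (b/m) = w * (a/m + b/m)" by (rule distrib_left[symmetric])
  hence s: "w * (a/m) + w * (b/m) = 2 * w" using s1 by simp
  have "(a/m) powr w + (b/m) powr w \<le> 2" using ya yb s by linarith
  hence "(a powr w + b powr w) / m powr w \<le> 2"
    using assms m by (simp add: powr_divide add_divide_distrib)
  hence "a powr w + b powr w \<le> 2 * m powr w" using m by (simp add: divide_le_eq)
  also have "2 * m powr w = 2 powr (1 - w) * (a + b) powr w"
    using assms by (simp add: m_def powr_divide powr_diff)
  finally show ?thesis .
qed

lemma lemA:
  fixes t w :: real
  assumes "0 < t" "t \<le> 1" "0 < w" "w < 1"
  shows "(1 + t) powr (w - 1) * (t - 1) + 1 \<le> 2 powr (1 - w) * t powr w"
proof -
  have b1: "1 + (w - 1) * t \<le> (1 + t) powr (w - 1)"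
    using neg_bern[of "1+t" "w-1"] assms by simp
  have c1: "(1 + t) powr (w - 1) * (t - 1) \<le> (1 + (w - 1) * t) * (t - 1)"
    using b1 assms by (intro mult_right_mono_neg) auto
  have b2: "1 + (1 - w) * (1 - t) \<le> t powr (w - 1)"
    using neg_bern[of t "w-1"] assms by (simp add: algebra_simps)
  have "1 \<le> 2 powr (1 - w)" using assms by (intro ge_one_powr_ge_zero) auto
  hence "1 + (1 - w) * (1 - t) \<le> 2 powr (1 - w) * t powr (w - 1)"
    using b2 mult_right_mono[OF \<open>1 \<le> 2 powr (1 - w)\<close>, of "t powr (w - 1)"] by simp
  hence "t * (1 + (1 - w) * (1 - t)) \<le> t * (2 powr (1 - w) * t powr (w - 1))"
    using assms by (intro mult_left_mono) auto
  also have "t * (2 powr (1 - w) * t powr (w - 1)) = 2 powr (1 - w) * t powr w"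
    using assms by (simp add: powr_add[symmetric] powr_mult_base)
  finally have c2: "t * (1 + (1 - w) * (1 - t)) \<le> 2 powr (1 - w) * t powr w" .
  have c3: "(1 + (w - 1) * t) * (t - 1) + 1 = t * (1 + (1 - w) * (1 - t))"
    by (simp add: algebra_simps)
  show ?thesis using c1 c2 c3 by linarith
qed

lemma upper_aux:
  fixes x y :: "'a::real_normed_vector" and w :: real
  assumes w: "0 < w" "w < 1" and le: "norm y \<le> norm x" and y0: "y \<noteq> 0" and xy: "x \<noteq> y"
  shows "norm (f_omega w x - f_omega w y) \<le> 2 powr (1 - w) * norm (x - y) powr w"
proof -
  define a where "a = norm x"
  define b where "b = norm y"
  define t where "t = norm (x - y)"
  have b0: "b > 0" using y0 by (simp add: b_def)
  have ab: "b \<le> a" using le by (simp add: a_def b_def)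
  have a0: "a > 0" using ab b0 by simp
  have x0: "x \<noteq> 0" using a0 by (auto simp: a_def)
  have t0: "t > 0" using xy by (simp add: t_def)
  have tri1: "a \<le> t + b" unfolding a_def b_def t_def by (metis norm_triangle_sub add.commute)
  have tri2: "t \<le> a + b" unfolding a_def b_def t_def by (rule norm_triangle_ineq4)
  have fx: "f_omega w x = a powr (w - 1) *\<^sub>R x" using x0 by (simp add: f_omega_def a_def)
  have fy: "f_omega w y = b powr (w - 1) *\<^sub>R y" using y0 by (simp add: f_omega_def b_def)
  have dec: "f_omega w x - f_omega w y = a powr (w - 1) *\<^sub>R (x - y) + (a powr (w - 1) - b powr (w - 1)) *\<^sub>R y"
    by (simp add: fx fy algebra_simps)
  have mono: "a powr (w - 1) \<le> b powr (w - 1)" using powr_mono2'[of "w - 1" b a] w b0 ab by simp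
  have bw: "b powr (w - 1) * b = b powr w" using powr_mult_base[of b "w - 1"] b0 by (simp add: mult.commute)
  have "norm (f_omega w x - f_omega w y) \<le> a powr (w - 1) * t + \<bar>a powr (w - 1) - b powr (w - 1)\<bar> * b"
    unfolding dec t_def b_def by (rule order_trans[OF norm_triangle_ineq]) simp
  also have "\<dots> = a powr (w - 1) * (t - b) + b powr w" using mono bw by (simp add: algebra_simps)
  finally have N: "norm (f_omega w x - f_omega w y) \<le> a powr (w - 1) * (t - b) + b powr w" .
  have "a powr (w - 1) * (t - b) + b powr w \<le> 2 powr (1 - w) * t powr w"
  proof (cases "b \<le> t")
    case True
    show ?thesis
    proof (cases "t \<le> 2 * b")
      case True2: True
      have "a powr (w - 1) * (t - b) \<le> b powr (w - 1) * (t - b)"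
        using mono True by (intro mult_right_mono) auto
      hence h: "a powr (w - 1) * (t - b) + b powr w \<le> b powr (w - 1) * t" using bw by (simp add: algebra_simps)
      have "(t / b) powr (1 - w) \<le> 2 powr (1 - w)" using True2 b0 w t0 by (intro powr_mono2) (auto simp: field_simps)
      hence "t powr w * (t / b) powr (1 - w) \<le> t powr w * 2 powr (1 - w)" by (intro mult_left_mono) auto
      moreover have "t powr w * (t / b) powr (1 - w) = b powr (w - 1) * t"
        using t0 b0 by (simp add: powr_divide powr_add[symmetric] powr_minus divide_simps powr_diff)
      ultimately show ?thesis using h by (simp add: mult.commute)
    next
      case False
      have tb: "t - b \<le> a" using tri2 by simp
      have "a powr (w - 1) \<le> (t - b) powr (w - 1)" using powr_mono2'[of "w - 1" "t - b" a] w b0 False tb by simp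
      hence "a powr (w - 1) * (t - b) \<le> (t - b) powr (w - 1) * (t - b)"
        using True by (intro mult_right_mono) auto
      also have "\<dots> = (t - b) powr w" using False b0 powr_mult_base[of "t - b" "w - 1"] by (simp add: mult.commute)
      finally have "a powr (w - 1) * (t - b) + b powr w \<le> (t - b) powr w + b powr w" by simp
      also have "\<dots> \<le> 2 powr (1 - w) * ((t - b) + b) powr w" using False b0 w by (intro conc_pow) auto
      finally show ?thesis by simp
    qed
  next
    case False
    have "a powr (w - 1) \<ge> (t + b) powr (w - 1)" using powr_mono2'[of "w - 1" a "t + b"] w a0 tri1 by simp
    hence h1: "a powr (w - 1) * (t - b) \<le> (t + b) powr (w - 1) * (t - b)"
      using False by (intro mult_right_mono_neg) auto
    define \<tau> where "\<tau> = t / b"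
    have tau: "0 < \<tau>" "\<tau> \<le> 1" using t0 b0 False by (auto simp: \<tau>_def)
    have A: "(1 + \<tau>) powr (w - 1) * (\<tau> - 1) + 1 \<le> 2 powr (1 - w) * \<tau> powr w"
      using lemA[OF tau w] .
    have "b powr w * ((1 + \<tau>) powr (w - 1) * (\<tau> - 1) + 1) \<le> b powr w * (2 powr (1 - w) * \<tau> powr w)"
      using A by (intro mult_left_mono) auto
    moreover have "b powr w * (2 powr (1 - w) * \<tau> powr w) = 2 powr (1 - w) * t powr w"
      using b0 t0 by (simp add: \<tau>_def powr_divide)
    moreover have "1 + \<tau> = (t + b) / b" using b0 by (simp add: \<tau>_def field_simps)
    moreover have "b powr w * (((t + b) / b) powr (w - 1) * (\<tau> - 1) + 1) = (t + b) powr (w - 1) * (t - b) + b powr w"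
    proof -
      have "((t + b) / b) powr (w - 1) = (t + b) powr (w - 1) / b powr (w - 1)"
        using b0 t0 by (simp add: powr_divide)
      moreover have "\<tau> - 1 = (t - b) / b" using b0 by (simp add: \<tau>_def field_simps)
      moreover have "b powr w = b powr (w - 1) * b" using bw by simp
      moreover have "b powr (w - 1) > 0" using b0 by simp
      ultimately show ?thesis using b0 by (simp add: field_simps)
    qed
    ultimately show ?thesis using h1 by simp
  qed
  with N show ?thesis by (simp add: t_def)
qed


definition gfun :: "real \<Rightarrow> real \<Rightarrow> real \<Rightarrow> real" where
  "gfun p w \<sigma> = (1 - \<sigma> powr w) / (1 - \<sigma>) * (1 + \<sigma> powr (p * w)) powr ((1 - w) / (p * w))"

lemma eta_eq: "eta p w = Inf (gfun p w ` {0..<1})"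
  unfolding eta_def gfun_def ..

lemma gfun_nonneg:
  assumes "0 < w" "\<sigma> \<in> {0..<1}"
  shows "0 \<le> gfun p w \<sigma>"
proof -
  have "\<sigma> powr w \<le> 1" using assms by (intro powr_le1) auto
  thus ?thesis using assms unfolding gfun_def by (intro mult_nonneg_nonneg divide_nonneg_nonneg) auto
qed

lemma eta_le:
  assumes "0 < w" "\<sigma> \<in> {0..<1}"
  shows "eta p w \<le> gfun p w \<sigma>"
  unfolding eta_eq
proof (rule cInf_lower)
  show "gfun p w \<sigma> \<in> gfun p w ` {0..<1}" using assms by auto
  show "bdd_below (gfun p w ` {0..<1})" using gfun_nonneg[OF assms(1)]
    by (intro bdd_belowI[of _ 0]) auto
qed

lemma eta_le1:
  assumes "0 < w"
  shows "eta p w \<le> 1"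
proof -
  have "gfun p w 0 = 1" by (simp add: gfun_def)
  thus ?thesis using eta_le[OF assms, of 0 p] by simp
qed

lemma eta_nonneg:
  assumes "0 < w"
  shows "0 \<le> eta p w"
  unfolding eta_eq
  by (rule cInf_greatest) (use gfun_nonneg[OF assms] in auto)


lemma lower_aux:
  fixes x y :: "'a::real_normed_vector" and w p :: real
  assumes w: "0 < w" "w < 1" and p: "0 < p" and le: "norm y \<le> norm x" and x0: "x \<noteq> 0"
  shows "eta p w * norm (x - y) / (norm x powr (p * w) + norm y powr (p * w)) powr ((1 - w) / (p * w))
          \<le> norm (f_omega w x - f_omega w y)"
proof -
  define a where "a = norm x"
  define b where "b = norm y"
  define t where "t = norm (x - y)"
  define k where "k = (1 - w) / (p * w)"
  define N where "N = norm (f_omega w x - f_omega w y)"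
  have a0: "a > 0" using x0 by (simp add: a_def)
  have ab: "b \<le> a" using le by (simp add: a_def b_def)
  have b0: "b \<ge> 0" by (simp add: b_def)
  have pk: "p * w * k = 1 - w" using p w by (simp add: k_def)
  have apk: "(a powr (p * w)) powr k = a powr (1 - w)" using pk by (simp add: powr_powr)
  have k0: "k \<ge> 0" using p w by (simp add: k_def)
  have e0: "0 \<le> eta p w" "eta p w \<le> 1" using eta_nonneg eta_le1 w by auto
  have fx: "f_omega w x = a powr (w - 1) *\<^sub>R x" using x0 by (simp add: f_omega_def a_def)
  have aw: "a powr (1 - w) * a powr (w - 1) = 1" using a0 by (simp add: powr_add[symmetric])
  have aw2: "a powr (1 - w) * a powr w = a" using a0 by (simp add: powr_add[symmetric])
  have am: "a * a powr (w - 1) = a powr w" using powr_mult_base[of a "w - 1"] a0 by simp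
  have goal: "eta p w * t / (a powr (p * w) + b powr (p * w)) powr k \<le> N"
  proof (cases "y = 0")
    case True
    have "b = 0" using True by (simp add: b_def)
    hence D: "(a powr (p * w) + b powr (p * w)) powr k = a powr (1 - w)" using apk by simp
    have t: "t = a" using True by (simp add: t_def a_def)
    have N: "N = a powr w"
      using True a0 x0 am by (simp add: N_def fx f_omega_def a_def[symmetric] mult.commute)
    have "eta p w * t / (a powr (p * w) + b powr (p * w)) powr k = eta p w * (a / a powr (1 - w))"
      by (simp add: D t)
    also have "a / a powr (1 - w) = a powr w" using a0 aw2 by (simp add: field_simps)
    also have "eta p w * a powr w \<le> 1 * a powr w" using e0 by (intro mult_right_mono) auto
    finally show ?thesis using N by simp
  next
    case False
    have b0: "b > 0" using False by (simp add: b_def)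
    have fy: "f_omega w y = b powr (w - 1) *\<^sub>R y" using False by (simp add: f_omega_def b_def)
    define u where "u = f_omega w x"
    define v where "v = f_omega w y"
    have bm: "b * b powr (w - 1) = b powr w" using powr_mult_base[of b "w - 1"] b0 by simp
    have nu: "norm u = a powr w" using a0 am by (simp add: u_def fx a_def[symmetric] mult.commute)
    have nv: "norm v = b powr w" using b0 bm by (simp add: v_def fy b_def[symmetric] mult.commute)
    have bw: "b powr (1 - w) * b powr (w - 1) = 1" using b0 by (simp add: powr_add[symmetric])
    have bw2: "b powr (1 - w) * b powr w = b" using b0 by (simp add: powr_add[symmetric])
    have xu: "x = a powr (1 - w) *\<^sub>R u" using aw by (simp add: u_def fx)
    have yv: "y = b powr (1 - w) *\<^sub>R v" using bw by (simp add: v_def fy)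
    have Nuv: "N = norm (u - v)" by (simp add: N_def u_def v_def)
    show ?thesis
    proof (cases "b = a")
      case True
      have "t = a powr (1 - w) * N" using True by (simp add: t_def Nuv xu yv scaleR_diff_right[symmetric])
      moreover have "(a powr (p * w) + b powr (p * w)) powr k = 2 powr k * a powr (1 - w)"
        using True apk a0 powr_mult[of 2 "a powr (p * w)" k] by simp
      moreover have "1 \<le> 2 powr k" using k0 by (intro ge_one_powr_ge_zero) auto
      ultimately have "eta p w * t / (a powr (p * w) + b powr (p * w)) powr k = eta p w * N / 2 powr k"
        using a0 by (simp add: field_simps)
      also have "\<dots> \<le> N"
      proof -
        have "eta p w * N \<le> 1 * N" using e0 by (intro mult_right_mono) (auto simp: Nuv)
        also have "\<dots> \<le> 2 powr k * N" using \<open>1 \<le> 2 powr k\<close> by (intro mult_right_mono) (auto simp: Nuv)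
        finally show ?thesis by (simp add: divide_le_eq mult.commute)
      qed
      finally show ?thesis .
    next
      case False
      hence ab': "b < a" using ab by simp
      have awb: "b powr w < a powr w" using ab' b0 w by (simp add: powr_less_mono2)
      have Nge: "a powr w - b powr w \<le> N" using norm_triangle_ineq2[of u v] nu nv Nuv by simp
      have mono: "b powr (1 - w) \<le> a powr (1 - w)" using ab b0 w by (intro powr_mono2) auto
      have "x - y = a powr (1 - w) *\<^sub>R (u - v) + (a powr (1 - w) - b powr (1 - w)) *\<^sub>R v"
        by (simp add: xu yv algebra_simps)
      hence "t \<le> a powr (1 - w) * N + \<bar>a powr (1 - w) - b powr (1 - w)\<bar> * b powr w"
        unfolding t_def Nuv using norm_triangle_ineq[of "a powr (1 - w) *\<^sub>R (u - v)" "(a powr (1 - w) - b powr (1 - w)) *\<^sub>R v"]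
        by (simp add: nv)
      hence tle: "t \<le> a powr (1 - w) * N + K" if "K = (a powr (1 - w) - b powr (1 - w)) * b powr w" for K
        using mono that by simp
      define K where "K = (a powr (1 - w) - b powr (1 - w)) * b powr w"
      have K0: "K \<ge> 0" using mono by (simp add: K_def)
      have "t * (a powr w - b powr w) \<le> (a powr (1 - w) * N + K) * (a powr w - b powr w)"
        using tle[OF K_def] awb by (intro mult_right_mono) auto
      also have "\<dots> \<le> a powr (1 - w) * N * (a powr w - b powr w) + K * N"
        using K0 Nge by (simp add: distrib_right mult_left_mono)
      also have "\<dots> = N * (a - b)"
        using aw2 bw2 by (simp add: K_def algebra_simps)
      finally have key: "t * (a powr w - b powr w) \<le> N * (a - b)" .
      define \<sigma> where "\<sigma> = b / a"
      have sig: "\<sigma> \<in> {0..<1}" using b0 ab' a0 by (auto simp: \<sigma>_def)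
      have g1: "1 - \<sigma> powr w = (a powr w - b powr w) / a powr w"
        using a0 b0 by (simp add: \<sigma>_def powr_divide field_simps)
      have g2: "1 - \<sigma> = (a - b) / a" using a0 by (simp add: \<sigma>_def field_simps)
      have g3: "(1 + \<sigma> powr (p * w)) powr k = (a powr (p * w) + b powr (p * w)) powr k / a powr (1 - w)"
      proof -
        have "1 + \<sigma> powr (p * w) = (a powr (p * w) + b powr (p * w)) / a powr (p * w)"
          using a0 b0 by (simp add: \<sigma>_def powr_divide field_simps)
        thus ?thesis using a0 apk by (simp add: powr_divide)
      qed
      define D where "D = (a powr (p * w) + b powr (p * w)) powr k"
      have "a powr (p * w) + b powr (p * w) > 0" using a0 by (intro add_pos_nonneg) auto
      hence D0: "D > 0" by (simp add: D_def)
      have gs: "gfun p w \<sigma> = (a powr w - b powr w) * D / (a - b)"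
      proof -
        have "gfun p w \<sigma> = ((a powr w - b powr w) / a powr w) / ((a - b) / a) * (D / a powr (1 - w))"
          unfolding gfun_def k_def[symmetric] g1 g2 g3 D_def ..
        also have "\<dots> = (a powr w - b powr w) * D / (a - b) * (a / (a powr w * a powr (1 - w)))"
          using a0 ab' by (simp add: field_simps)
        also have "a powr w * a powr (1 - w) = a" using aw2 by (simp add: mult.commute)
        finally show ?thesis using a0 by simp
      qed
      have "eta p w * t / D \<le> gfun p w \<sigma> * t / D"
        using eta_le[OF w(1) sig] D0 by (intro divide_right_mono mult_right_mono) (auto simp: t_def)
      also have "\<dots> = t * (a powr w - b powr w) / (a - b)" using gs D0 by simp
      also have "\<dots> \<le> N" using key ab' by (simp add: divide_le_eq)
      finally show ?thesis by (simp add: D_def)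
    qed
  qed
  thus ?thesis by (simp add: a_def b_def t_def k_def N_def)
qed


lemma f_omega_sym: "norm (f_omega w x - f_omega w y) = norm (f_omega w y - f_omega w x)"
  by (rule norm_minus_commute)

lemma f_omega_norm:
  assumes "0 < w"
  shows "norm (f_omega w x) = norm x powr w"
proof (cases "x = 0")
  case False
  hence "norm x > 0" by simp
  thus ?thesis using False powr_mult_base[of "norm x" "w - 1"] by (simp add: f_omega_def mult.commute)
qed (use assms in \<open>simp add: f_omega_def\<close>)

lemma f_omega_unit_scale:
  assumes "norm e = 1" "0 \<le> s"
  shows "f_omega w (s *\<^sub>R e) = (s powr w) *\<^sub>R e"
proof (cases "s = 0")
  case False
  hence s0: "s > 0" using assms by simp
  have "s powr (w - 1) * s = s powr w" using powr_mult_base[of s "w - 1"] s0 by (simp add: mult.commute)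
  thus ?thesis using s0 assms by (simp add: f_omega_def)
qed (simp add: f_omega_def)

theorem lemma5p12:
  fixes \<omega> p :: real
  assumes "0 < \<omega>" "\<omega> < 1" "0 < p"
  shows "(\<forall>x y :: 'a::banach.
            eta p \<omega> * norm (x - y)
              / (norm x powr (p * \<omega>) + norm y powr (p * \<omega>)) powr ((1 - \<omega>) / (p * \<omega>))
              \<le> norm (f_omega \<omega> x - f_omega \<omega> y)
          \<and> norm (f_omega \<omega> x - f_omega \<omega> y) \<le> 2 powr (1 - \<omega>) * norm (x - y) powr \<omega>)
       \<and> ((\<exists>z :: 'a. z \<noteq> 0) \<longrightarrow>
            (\<forall>c > eta p \<omega>. \<exists>x y :: 'a.
               norm (f_omega \<omega> x - f_omega \<omega> y) < c * norm (x - y)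
                 / (norm x powr (p * \<omega>) + norm y powr (p * \<omega>)) powr ((1 - \<omega>) / (p * \<omega>)))
          \<and> (\<forall>c < 2 powr (1 - \<omega>). \<exists>x y :: 'a.
               c * norm (x - y) powr \<omega> < norm (f_omega \<omega> x - f_omega \<omega> y)))"
proof -
  note w = assms(1,2)
  have upper: "norm (f_omega \<omega> x - f_omega \<omega> y) \<le> 2 powr (1 - \<omega>) * norm (x - y) powr \<omega>" for x y :: 'a
  proof -
    have one: "1 \<le> 2 powr (1 - \<omega>)" using w by (intro ge_one_powr_ge_zero) auto
    have triv: "norm (f_omega \<omega> x) \<le> 2 powr (1 - \<omega>) * norm x powr \<omega>" for x :: 'a
      using f_omega_norm[OF w(1), of x] mult_right_mono[OF one, of "norm x powr \<omega>"] by simp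
    show ?thesis
    proof (cases "x = y")
      case True thus ?thesis by simp
    next
      case xy: False
      show ?thesis
      proof (cases "y = 0")
        case True thus ?thesis using triv[of x] by (simp add: f_omega_def)
      next
        case y0: False
        show ?thesis
        proof (cases "x = 0")
          case True thus ?thesis using triv[of y] by (simp add: f_omega_def norm_minus_commute)
        next
          case x0: False
          show ?thesis
          proof (cases "norm y \<le> norm x")
            case True thus ?thesis using upper_aux[OF w True y0 xy] by simp
          next
            case False
            hence "norm x \<le> norm y" by simp
            from upper_aux[OF w this x0] xy show ?thesis by (simp add: norm_minus_commute)
          qed
        qed
      qed
    qed
  qed
  have lower: "eta p \<omega> * norm (x - y)
              / (norm x powr (p * \<omega>) + norm y powr (p * \<omega>)) powr ((1 - \<omega>) / (p * \<omega>))
              \<le> norm (f_omega \<omega> x - f_omega \<omega> y)" for x y :: 'a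
  proof (cases "x = 0 \<and> y = 0")
    case True thus ?thesis by simp
  next
    case False
    show ?thesis
    proof (cases "norm y \<le> norm x")
      case True
      hence "x \<noteq> 0" using False by auto
      from lower_aux[OF w assms(3) True this] show ?thesis .
    next
      case c: False
      hence le: "norm x \<le> norm y" by simp
      hence "y \<noteq> 0" using False by auto
      from lower_aux[OF w assms(3) le this] show ?thesis
        by (simp add: norm_minus_commute add.commute)
    qed
  qed
  have sharp: "(\<forall>c > eta p \<omega>. \<exists>x y :: 'a.
               norm (f_omega \<omega> x - f_omega \<omega> y) < c * norm (x - y)
                 / (norm x powr (p * \<omega>) + norm y powr (p * \<omega>)) powr ((1 - \<omega>) / (p * \<omega>)))
          \<and> (\<forall>c < 2 powr (1 - \<omega>). \<exists>x y :: 'a.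
               c * norm (x - y) powr \<omega> < norm (f_omega \<omega> x - f_omega \<omega> y))"
    if "\<exists>z :: 'a. z \<noteq> 0"
  proof -
    from that obtain z :: 'a where z: "z \<noteq> 0" by blast
    define e where "e = (1 / norm z) *\<^sub>R z"
    have ne: "norm e = 1" using z by (simp add: e_def)
    have fe: "f_omega \<omega> e = e" using f_omega_unit_scale[OF ne, of 1 \<omega>] by simp
    have fme: "f_omega \<omega> (- e) = - e"
      using ne by (simp add: f_omega_def)
    show ?thesis
    proof (intro conjI allI impI)
      fix c assume c: "c > eta p \<omega>"
      obtain \<sigma> where sig: "\<sigma> \<in> {0..<1}" and gc: "gfun p \<omega> \<sigma> < c"
        using cInf_lessD[of "gfun p \<omega> ` {0..<1}" c] c unfolding eta_eq by auto
      define D where "D = (1 + \<sigma> powr (p * \<omega>)) powr ((1 - \<omega>) / (p * \<omega>))"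
      have D0: "D > 0" unfolding D_def by (smt (verit) powr_gt_zero powr_ge_zero)
      have s1: "1 - \<sigma> > 0" using sig by simp
      have fs: "f_omega \<omega> (\<sigma> *\<^sub>R e) = (\<sigma> powr \<omega>) *\<^sub>R e"
        using f_omega_unit_scale[OF ne] sig by simp
      have sw: "\<sigma> powr \<omega> \<le> 1" using sig w by (intro powr_le1) auto
      have N: "norm (f_omega \<omega> e - f_omega \<omega> (\<sigma> *\<^sub>R e)) = 1 - \<sigma> powr \<omega>"
      proof -
        have "f_omega \<omega> e - f_omega \<omega> (\<sigma> *\<^sub>R e) = (1 - \<sigma> powr \<omega>) *\<^sub>R e"
          by (simp add: fe fs algebra_simps)
        thus ?thesis using ne sw by simp
      qed
      have T: "norm (e - \<sigma> *\<^sub>R e) = 1 - \<sigma>"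
      proof -
        have "e - \<sigma> *\<^sub>R e = (1 - \<sigma>) *\<^sub>R e" by (simp add: algebra_simps)
        thus ?thesis using ne s1 by simp
      qed
      have nse: "norm (\<sigma> *\<^sub>R e) = \<sigma>" using ne sig by simp
      have "gfun p \<omega> \<sigma> = (1 - \<sigma> powr \<omega>) / (1 - \<sigma>) * D" by (simp add: gfun_def D_def)
      hence "(1 - \<sigma> powr \<omega>) / (1 - \<sigma>) * D < c" using gc by simp
      hence ineq: "1 - \<sigma> powr \<omega> < c * (1 - \<sigma>) / D" using s1 D0 by (simp add: field_simps)
      have "norm (f_omega \<omega> e - f_omega \<omega> (\<sigma> *\<^sub>R e)) < c * norm (e - \<sigma> *\<^sub>R e)
                 / (norm e powr (p * \<omega>) + norm (\<sigma> *\<^sub>R e) powr (p * \<omega>)) powr ((1 - \<omega>) / (p * \<omega>))"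
        unfolding N T nse ne using ineq by (simp add: D_def)
      thus "\<exists>x y :: 'a. norm (f_omega \<omega> x - f_omega \<omega> y) < c * norm (x - y)
                 / (norm x powr (p * \<omega>) + norm y powr (p * \<omega>)) powr ((1 - \<omega>) / (p * \<omega>))"
        by blast
    next
      fix c assume c: "c < 2 powr (1 - \<omega>)"
      have N: "norm (f_omega \<omega> e - f_omega \<omega> (- e)) = 2" using fe fme ne by (simp add: scaleR_2[symmetric])
      have T: "norm (e - - e) = 2" using ne by (simp add: scaleR_2[symmetric])
      have "c * 2 powr \<omega> < 2 powr (1 - \<omega>) * 2 powr \<omega>" using c by (intro mult_strict_right_mono) auto
      also have "\<dots> = 2" by (simp add: powr_add[symmetric])
      finally have "c * norm (e - - e) powr \<omega> < norm (f_omega \<omega> e - f_omega \<omega> (- e))"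
        unfolding N T .
      thus "\<exists>x y :: 'a. c * norm (x - y) powr \<omega> < norm (f_omega \<omega> x - f_omega \<omega> y)"
        by blast
    qed
  qed
  have A: "\<forall>x y :: 'a.
            eta p \<omega> * norm (x - y)
              / (norm x powr (p * \<omega>) + norm y powr (p * \<omega>)) powr ((1 - \<omega>) / (p * \<omega>))
              \<le> norm (f_omega \<omega> x - f_omega \<omega> y)
          \<and> norm (f_omega \<omega> x - f_omega \<omega> y) \<le> 2 powr (1 - \<omega>) * norm (x - y) powr \<omega>"
    by (intro allI conjI lower upper)
  show ?thesis by (rule conjI[OF A impI[OF sharp]])
qed

end
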